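(* There exists a universal constant $K>0$ such that the following holds. Let $q$ be a probability distribution on $[d]$, write $\gamma=\min\{q(j):j\in[d]\}$, and let $\theta\ge 0$. If $T\ge K\cdot\max\{\frac{\sqrt d}{\theta},\frac{1}{\sqrt{\theta\gamma}}\}$, then there is an algorithm which, given $c=2$ independent samples from each of (unknown) probability distributions $p_1,\dots,p_T$ on $[d]$ (all samples mutually independent), distinguishes with probability at least $0.99$ the case $\chi^2(p_{\mathrm{avg}}\,\|\,q)\le 0.99\,\theta$ from the case $\chi^2(p_{\mathrm{avg}}\,\|\,q)>\theta$, where $p_{\mathrm{avg}}=\frac1T\sum_{t=1}^Tp_t$.
   Context: $\chi^2(p\,\|\,q)=\sum_{j=1}^d\frac{(p(j)-q(j))^2}{q(j)}=\sum_{j=1}^d\frac{p(j)^2}{q(j)}-1$ is the $\chi^2$-divergence. "Distinguishes with probability at least $0.99$" means: the algorithm (which may depend on $d,q,\theta,T$ but not on the $p_t$) outputs accept/reject, accepting with probability at least $0.99$ in the first case and rejecting with probability at least $0.99$ in the second case. *)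

theory Defs
  imports Complex_Main "HOL-Library.FuncSet"
begin

text \<open>Domain [d] is represented as {0..<d}. A distribution on [d] is a function
  nat => real, nonnegative on {..<d}, summing to 1 over {..<d}.\<close>

definition is_dist :: "nat \<Rightarrow> (nat \<Rightarrow> real) \<Rightarrow> bool" where
  "is_dist d p \<longleftrightarrow> (\<forall>j<d. 0 \<le> p j) \<and> (\<Sum>j<d. p j) = 1"

definition chi2 :: "nat \<Rightarrow> (nat \<Rightarrow> real) \<Rightarrow> (nat \<Rightarrow> real) \<Rightarrow> real" where
  "chi2 d p q = (\<Sum>j<d. (p j - q j)^2 / q j)"

definition p_avg :: "nat \<Rightarrow> (nat \<Rightarrow> nat \<Rightarrow> real) \<Rightarrow> nat \<Rightarrow> real" where
  "p_avg T p j = (\<Sum>t<T. p t j) / real T"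

text \<open>Sample outcomes: s t i is the i-th sample (i < c) drawn from p t (t < T).\<close>
definition sample_space :: "nat \<Rightarrow> nat \<Rightarrow> nat \<Rightarrow> (nat \<Rightarrow> nat \<Rightarrow> nat) set" where
  "sample_space d T c = (\<Pi>\<^sub>E t\<in>{..<T}. \<Pi>\<^sub>E i\<in>{..<c}. {..<d})"

definition sample_prob :: "nat \<Rightarrow> nat \<Rightarrow> (nat \<Rightarrow> nat \<Rightarrow> real) \<Rightarrow> (nat \<Rightarrow> nat \<Rightarrow> nat) \<Rightarrow> real" where
  "sample_prob T c p s = (\<Prod>t<T. \<Prod>i<c. p t (s t i))"

text \<open>A (possibly randomized) algorithm is given by A s \<in> [0,1], the probability of
  accepting on outcome s; its overall acceptance probability:\<close>
definition accept_prob :: "nat \<Rightarrow> nat \<Rightarrow> nat \<Rightarrow> (nat \<Rightarrow> nat \<Rightarrow> real) \<Rightarrow> ((nat \<Rightarrow> nat \<Rightarrow> nat) \<Rightarrow> real) \<Rightarrow> real" where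
  "accept_prob d T c p A = (\<Sum>s\<in>sample_space d T c. sample_prob T c p s * A s)"

end

theory Submission
  imports Defs "HOL-Analysis.Convex"
begin


definition expx :: "nat \<Rightarrow> nat \<Rightarrow> (nat \<Rightarrow> nat \<Rightarrow> real) \<Rightarrow> ((nat \<Rightarrow> nat) \<Rightarrow> real) \<Rightarrow> real" where
  "expx d T p f = (\<Sum>x\<in>PiE {..<T} (\<lambda>_. {..<d}). (\<Prod>t<T. p t (x t)) * f x)"

lemma expx_prod:
  "expx d T p (\<lambda>x. \<Prod>t<T. g t (x t)) = (\<Prod>t<T. \<Sum>k<d. p t k * g t k)"
  unfolding expx_def
  by (subst prod_sum_PiE) (auto simp: prod.distrib)

lemma expx_add: "expx d T p (\<lambda>x. f x + g x) = expx d T p f + expx d T p g"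
  unfolding expx_def by (simp add: distrib_left sum.distrib)

lemma expx_diff: "expx d T p (\<lambda>x. f x - g x) = expx d T p f - expx d T p g"
  unfolding expx_def by (simp add: right_diff_distrib sum_subtractf)

lemma expx_cmult: "expx d T p (\<lambda>x. c * f x) = c * expx d T p f"
  unfolding expx_def sum_distrib_left by (intro sum.cong) (auto simp: mult_ac)

lemma expx_multc: "expx d T p (\<lambda>x. f x * c) = expx d T p f * c"
  using expx_cmult[of d T p c f] by (simp add: mult.commute)

lemma expx_divc: "expx d T p (\<lambda>x. f x / c) = expx d T p f / c"
  using expx_cmult[of d T p "1/c" f] by (simp add: field_simps)

lemma expx_sum: "expx d T p (\<lambda>x. \<Sum>i\<in>I. f i x) = (\<Sum>i\<in>I. expx d T p (f i))"
  unfolding expx_def by (simp add: sum_distrib_left sum.swap[of _ I])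

definition dists :: "nat \<Rightarrow> nat \<Rightarrow> (nat \<Rightarrow> nat \<Rightarrow> real) \<Rightarrow> bool" where
  "dists d T p \<longleftrightarrow> (\<forall>t<T. is_dist d (p t))"

lemma expx_mono:
  assumes "dists d T p" "\<And>x. x \<in> PiE {..<T} (\<lambda>_. {..<d}) \<Longrightarrow> f x \<le> g x"
  shows "expx d T p f \<le> expx d T p g"
  unfolding expx_def
proof (rule sum_mono)
  fix x assume x: "x \<in> PiE {..<T} (\<lambda>_. {..<d})"
  have "0 \<le> (\<Prod>t<T. p t (x t))"
    using assms(1) x by (intro prod_nonneg) (auto simp: dists_def is_dist_def)
  then show "(\<Prod>t<T. p t (x t)) * f x \<le> (\<Prod>t<T. p t (x t)) * g x"
    using assms(2)[OF x] by (simp add: mult_left_mono)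
qed

lemma expx_one: assumes "dists d T p" shows "expx d T p (\<lambda>_. 1) = 1"
proof -
  have "expx d T p (\<lambda>x. \<Prod>t<T. (\<lambda>t k. 1) t (x t)) = 1"
    by (subst expx_prod) (use assms in \<open>auto simp: dists_def is_dist_def\<close>)
  then show ?thesis by simp
qed

lemma expx_const: assumes "dists d T p" shows "expx d T p (\<lambda>_. c) = c"
  using expx_cmult[of d T p c "\<lambda>_. 1"] expx_one[OF assms] by simp

lemma sum_delta_mult:
  fixes f :: "nat \<Rightarrow> real"
  assumes "j < d" shows "(\<Sum>k<d. f k * (if k = j then 1 else 0)) = f j"
proof -
  have "(\<Sum>k<d. f k * (if k = j then 1 else 0)) = (\<Sum>k<d. if k = j then f k else 0)"
    by (intro sum.cong) auto
  then show ?thesis using assms by simp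
qed

lemma expx_ind1:
  assumes "dists d T p" "t0 < T" "j < d"
  shows "expx d T p (\<lambda>x. if x t0 = j then 1 else 0) = p t0 j"
proof -
  let ?g = "\<lambda>t k. if t = t0 then (if k = j then 1 else 0) else (1::real)"
  have "expx d T p (\<lambda>x. \<Prod>t<T. ?g t (x t)) = (\<Prod>t<T. \<Sum>k<d. p t k * ?g t k)"
    by (rule expx_prod)
  also have "\<dots> = (\<Prod>t<T. if t = t0 then p t0 j else 1)"
    using assms by (intro prod.cong) (auto simp: dists_def is_dist_def sum_delta_mult)
  also have "\<dots> = p t0 j" using assms by simp
  finally show ?thesis
    using assms by simp
qed

lemma prod_two_delta:
  fixes a b :: real
  assumes "t0 < (T::nat)" "t1 < T" "t0 \<noteq> t1"
  shows "(\<Prod>t<T. if t = t0 then a else if t = t1 then b else 1) = a * b"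
proof -
  have "(\<Prod>t<T. if t = t0 then a else if t = t1 then b else 1)
      = (\<Prod>t<T. (if t = t0 then a else 1) * (if t = t1 then b else 1))"
    using assms by (intro prod.cong) auto
  also have "\<dots> = a * b" using assms by (simp add: prod.distrib prod.delta)
  finally show ?thesis .
qed

lemma expx_ind2:
  assumes "dists d T p" "t0 < T" "t1 < T" "j < d" "k < d"
  shows "expx d T p (\<lambda>x. (if x t0 = j then 1 else 0) * (if x t1 = k then 1 else 0))
       = (if t0 = t1 then (if j = k then p t0 j else 0) else p t0 j * p t1 k)"
proof (cases "t0 = t1")
  case True
  have "expx d T p (\<lambda>x. (if x t0 = j then 1 else 0) * (if x t1 = k then 1 else 0))
      = expx d T p (\<lambda>x. (if j = k then 1 else 0) * (if x t0 = j then 1 else 0))"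
    unfolding expx_def using True by (intro sum.cong) auto
  also have "\<dots> = (if j = k then 1 else 0) * p t0 j"
    by (simp only: expx_cmult expx_ind1[OF assms(1,2,4)])
  finally show ?thesis using True by simp
next
  case False
  let ?g = "\<lambda>t v. if t = t0 then (if v = j then 1 else 0) else if t = t1 then (if v = k then 1 else 0) else (1::real)"
  have "expx d T p (\<lambda>x. \<Prod>t<T. ?g t (x t)) = (\<Prod>t<T. \<Sum>v<d. p t v * ?g t v)"
    by (rule expx_prod)
  also have "\<dots> = (\<Prod>t<T. if t = t0 then p t0 j else if t = t1 then p t1 k else 1)"
    using assms by (intro prod.cong) (auto simp: dists_def is_dist_def sum_delta_mult)
  also have "\<dots> = p t0 j * p t1 k" using assms False by (simp add: prod_two_delta)
  finally have e: "expx d T p (\<lambda>x. \<Prod>t<T. ?g t (x t)) = p t0 j * p t1 k" .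
  have "expx d T p (\<lambda>x. \<Prod>t<T. ?g t (x t)) = expx d T p (\<lambda>x. (if x t0 = j then 1 else 0) * (if x t1 = k then 1 else 0))"
    unfolding expx_def
  proof (intro sum.cong refl)
    fix x :: "nat \<Rightarrow> nat"
    have "(\<Prod>t<T. ?g t (x t)) = (\<Prod>t<T. if t = t0 then (if x t0 = j then 1 else 0) else if t = t1 then (if x t1 = k then 1 else 0) else (1::real))"
      by (intro prod.cong) auto
    also have "\<dots> = (if x t0 = j then 1 else 0) * (if x t1 = k then 1 else 0)"
      by (rule prod_two_delta[OF assms(2,3) False])
    finally show "(\<Prod>t<T. p t (x t)) * (\<Prod>t<T. ?g t (x t)) = (\<Prod>t<T. p t (x t)) * ((if x t0 = j then 1 else 0) * (if x t1 = k then 1 else 0))"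
      by simp
  qed
  then show ?thesis using e False by simp
qed

definition afreq :: "nat \<Rightarrow> (nat \<Rightarrow> nat) \<Rightarrow> nat \<Rightarrow> real" where
  "afreq T x j = (\<Sum>t<T. if x t = j then 1 else 0) / real T"

definition Mm :: "nat \<Rightarrow> (nat \<Rightarrow> nat \<Rightarrow> real) \<Rightarrow> nat \<Rightarrow> nat \<Rightarrow> real" where
  "Mm T p j k = (\<Sum>t<T. \<Sum>s<T. (if t = s then (if j = k then p t j else 0) else p t j * p s k)) / (real T)^2"

lemma expx_afreq:
  assumes "dists d T p" "j < d"
  shows "expx d T p (\<lambda>x. afreq T x j) = p_avg T p j"
  unfolding afreq_def p_avg_def expx_divc expx_sum
  using assms by (simp add: expx_ind1)

lemma expx_afreq2:
  assumes "dists d T p" "j < d" "k < d"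
  shows "expx d T p (\<lambda>x. afreq T x j * afreq T x k) = Mm T p j k"
proof -
  have "(\<lambda>x. afreq T x j * afreq T x k) = (\<lambda>x. (\<Sum>t<T. \<Sum>s<T. (if x t = j then 1 else 0) * (if x s = k then 1 else 0)) / (real T)^2)"
    unfolding afreq_def by (auto simp: sum_product power2_eq_square)
  then show ?thesis
    unfolding Mm_def using assms
    by (simp add: expx_divc expx_sum expx_ind2)
qed



definition Zs :: "nat \<Rightarrow> nat \<Rightarrow> (nat \<Rightarrow> real) \<Rightarrow> (nat \<Rightarrow> nat) \<Rightarrow> (nat \<Rightarrow> nat) \<Rightarrow> real" where
  "Zs d T q x y = (\<Sum>j<d. afreq T x j * afreq T y j / q j)"

lemma E2_Z:
  assumes "dists d T p"
  shows "expx d T p (\<lambda>x. expx d T p (\<lambda>y. Zs d T q x y)) = (\<Sum>j<d. (p_avg T p j)^2 / q j)"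
proof -
  have i: "expx d T p (\<lambda>y. Zs d T q x y) = (\<Sum>j<d. (afreq T x j / q j) * p_avg T p j)" for x
  proof -
    have "expx d T p (\<lambda>y. Zs d T q x y) = expx d T p (\<lambda>y. \<Sum>j<d. (afreq T x j / q j) * afreq T y j)"
      unfolding Zs_def by (simp add: field_simps)
    also have "\<dots> = (\<Sum>j<d. (afreq T x j / q j) * p_avg T p j)"
      by (simp only: expx_sum expx_cmult) (intro sum.cong refl, simp add: expx_afreq assms)
    finally show ?thesis .
  qed
  have "expx d T p (\<lambda>x. \<Sum>j<d. (afreq T x j / q j) * p_avg T p j)
      = expx d T p (\<lambda>x. \<Sum>j<d. (p_avg T p j / q j) * afreq T x j)"
    by (simp add: field_simps)
  also have "\<dots> = (\<Sum>j<d. (p_avg T p j / q j) * p_avg T p j)"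
    by (simp only: expx_sum expx_cmult) (intro sum.cong refl, simp add: expx_afreq assms)
  also have "\<dots> = (\<Sum>j<d. (p_avg T p j)^2 / q j)"
    by (simp add: power2_eq_square)
  finally show ?thesis by (simp add: i)
qed

lemma E2_Z2:
  assumes "dists d T p"
  shows "expx d T p (\<lambda>x. expx d T p (\<lambda>y. (Zs d T q x y)^2)) = (\<Sum>j<d. \<Sum>k<d. (Mm T p j k)^2 / (q j * q k))"
proof -
  have sq: "(Zs d T q x y)^2 = (\<Sum>j<d. \<Sum>k<d. (afreq T x j * afreq T x k / (q j * q k)) * (afreq T y j * afreq T y k))" for x y
    unfolding Zs_def power2_eq_square sum_product by (intro sum.cong refl) (simp add: field_simps)
  have i: "expx d T p (\<lambda>y. (Zs d T q x y)^2) = (\<Sum>j<d. \<Sum>k<d. (afreq T x j * afreq T x k / (q j * q k)) * Mm T p j k)" for x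
    unfolding sq by (simp only: expx_sum expx_cmult) (intro sum.cong refl, simp add: expx_afreq2 assms)
  have "expx d T p (\<lambda>x. \<Sum>j<d. \<Sum>k<d. (afreq T x j * afreq T x k / (q j * q k)) * Mm T p j k)
     = expx d T p (\<lambda>x. \<Sum>j<d. \<Sum>k<d. (Mm T p j k / (q j * q k)) * (afreq T x j * afreq T x k))"
    by (simp add: field_simps)
  also have "\<dots> = (\<Sum>j<d. \<Sum>k<d. (Mm T p j k / (q j * q k)) * Mm T p j k)"
    by (simp only: expx_sum expx_cmult) (intro sum.cong refl, simp add: expx_afreq2 assms)
  also have "\<dots> = (\<Sum>j<d. \<Sum>k<d. (Mm T p j k)^2 / (q j * q k))"
    by (simp add: power2_eq_square)
  finally show ?thesis by (simp add: i)
qed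



definition cc :: "(nat \<Rightarrow> real) \<Rightarrow> nat \<Rightarrow> nat \<Rightarrow> real" where
  "cc p j k = (if j = k then p j else 0) - p j * p k"

lemma var_single:
  fixes p r :: "nat \<Rightarrow> real"
  assumes "is_dist d p"
  shows "(\<Sum>j<d. p j * (r j)^2) - (\<Sum>j<d. p j * r j)^2 \<le> (\<Sum>j<d. p j * (r j - 1)^2)"
proof -
  have "(\<Sum>j<d. p j * (r j - 1)^2) = (\<Sum>j<d. p j * (r j)^2 - 2 * (p j * r j) + p j)"
    by (intro sum.cong refl) (simp add: power2_eq_square algebra_simps)
  also have "\<dots> = (\<Sum>j<d. p j * (r j)^2) - 2 * (\<Sum>j<d. p j * r j) + (\<Sum>j<d. p j)"
    by (simp add: sum.distrib sum_subtractf sum_distrib_left)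
  finally have e: "(\<Sum>j<d. p j * (r j - 1)^2) = (\<Sum>j<d. p j * (r j)^2) - 2 * (\<Sum>j<d. p j * r j) + 1"
    using assms by (simp add: is_dist_def)
  have "0 \<le> ((\<Sum>j<d. p j * r j) - 1)^2" by simp
  then have "0 \<le> (\<Sum>j<d. p j * r j)^2 - 2 * (\<Sum>j<d. p j * r j) + 1"
    by (simp add: power2_eq_square algebra_simps)
  then show ?thesis using e by linarith
qed

lemma sum_delta_nat:
  fixes X :: "nat \<Rightarrow> real"
  assumes "j < d"
  shows "(\<Sum>k<d. if j = k then X k else 0) = X j"
  using assms by simp

lemma rr_cc:
  fixes p r :: "nat \<Rightarrow> real"
  shows "(\<Sum>j<d. \<Sum>k<d. r j * r k * cc p j k) = (\<Sum>j<d. p j * (r j)^2) - (\<Sum>j<d. p j * r j)^2"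
proof -
  have "(\<Sum>j<d. \<Sum>k<d. r j * r k * cc p j k)
      = (\<Sum>j<d. (\<Sum>k<d. if j = k then p k * (r k)^2 else 0) - (\<Sum>k<d. (p j * r j) * (p k * r k)))"
  proof (intro sum.cong refl)
    fix j
    have pt: "r j * r k * cc p j k = (if j = k then p k * (r k)^2 else 0) - (p j * r j) * (p k * r k)" for k
      by (auto simp: cc_def power2_eq_square algebra_simps)
    show "(\<Sum>k<d. r j * r k * cc p j k) = (\<Sum>k<d. if j = k then p k * (r k)^2 else 0) - (\<Sum>k<d. (p j * r j) * (p k * r k))"
      unfolding pt by (rule sum_subtractf)
  qed
  also have "\<dots> = (\<Sum>j<d. p j * (r j)^2 - (\<Sum>k<d. (p j * r j) * (p k * r k)))"
    by (intro sum.cong refl) simp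
  also have "\<dots> = (\<Sum>j<d. p j * (r j)^2) - (\<Sum>j<d. p j * r j)^2"
    by (simp add: sum_subtractf power2_eq_square sum_product)
  finally show ?thesis .
qed

lemma cc_single:
  fixes p p' q :: "nat \<Rightarrow> real"
  assumes "is_dist d p" "is_dist d p'" "\<forall>j<d. 0 < q j"
  shows "(\<Sum>j<d. \<Sum>k<d. cc p j k * cc p' j k / (q j * q k)) \<le> 2 * (\<Sum>j<d. p j * p' j / (q j)^2)"
proof -
  let ?X = "\<lambda>j. p j * p' j / (q j)^2 - p j * p' j * p' j / (q j)^2 - p' j * p j * p j / (q j)^2"
  have "(\<Sum>j<d. \<Sum>k<d. cc p j k * cc p' j k / (q j * q k))
     = (\<Sum>j<d. \<Sum>k<d. (if j = k then ?X k else 0) + (p j * p' j / q j) * (p k * p' k / q k))"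
    unfolding cc_def using assms(3)
    by (intro sum.cong refl) (auto simp: field_simps power2_eq_square)
  also have "\<dots> = (\<Sum>j<d. ?X j) + (\<Sum>j<d. p j * p' j / q j)^2"
    by (simp add: sum.distrib power2_eq_square sum_product)
  finally have e: "(\<Sum>j<d. \<Sum>k<d. cc p j k * cc p' j k / (q j * q k)) = (\<Sum>j<d. ?X j) + (\<Sum>j<d. p j * p' j / q j)^2" .
  have p0: "\<And>j. j < d \<Longrightarrow> 0 \<le> p j" "\<And>j. j < d \<Longrightarrow> 0 \<le> p' j"
    using assms by (auto simp: is_dist_def)
  have p1: "p' j \<le> 1" if "j < d" for j
  proof -
    have "p' j \<le> (\<Sum>k<d. p' k)"
      using that p0 by (intro member_le_sum) auto
    then show ?thesis using assms(2) by (simp add: is_dist_def)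
  qed
  have X: "(\<Sum>j<d. ?X j) \<le> (\<Sum>j<d. p j * p' j / (q j)^2)"
  proof (rule sum_mono)
    fix j assume "j \<in> {..<d}"
    then have "0 \<le> p j * p' j * p' j / (q j)^2" "0 \<le> p' j * p j * p j / (q j)^2"
      using p0 by auto
    then show "?X j \<le> p j * p' j / (q j)^2" by linarith
  qed
  have "(\<Sum>j<d. p j * p' j / q j)^2 = (\<Sum>j<d. (sqrt (p j * p' j) / q j) * sqrt (p j * p' j))^2"
  proof (intro arg_cong[where f="\<lambda>x. x^2"] sum.cong refl)
    fix j assume "j \<in> {..<d}"
    then have "sqrt (p j * p' j) * sqrt (p j * p' j) = p j * p' j" using p0 by simp
    then show "p j * p' j / q j = (sqrt (p j * p' j) / q j) * sqrt (p j * p' j)"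
      by (simp add: field_simps)
  qed
  also have "\<dots> \<le> (\<Sum>j<d. (sqrt (p j * p' j) / q j)^2) * (\<Sum>j<d. (sqrt (p j * p' j))^2)"
    by (rule Cauchy_Schwarz_ineq_sum)
  also have "\<dots> = (\<Sum>j<d. p j * p' j / (q j)^2) * (\<Sum>j<d. p j * p' j)"
    using p0 by (simp add: power_divide)
  also have "\<dots> \<le> (\<Sum>j<d. p j * p' j / (q j)^2) * 1"
  proof (rule mult_left_mono)
    have "(\<Sum>j<d. p j * p' j) \<le> (\<Sum>j<d. p j)"
      using p0 p1 by (intro sum_mono) (simp add: mult_left_le)
    then show "(\<Sum>j<d. p j * p' j) \<le> 1" using assms(1) by (simp add: is_dist_def)
    show "0 \<le> (\<Sum>j<d. p j * p' j / (q j)^2)" using p0 by (intro sum_nonneg) simp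
  qed
  finally show ?thesis using e X by linarith
qed



definition Cm :: "nat \<Rightarrow> (nat \<Rightarrow> nat \<Rightarrow> real) \<Rightarrow> nat \<Rightarrow> nat \<Rightarrow> real" where
  "Cm T p j k = (\<Sum>t<T. cc (p t) j k) / (real T)^2"

lemma Mm_decomp:
  assumes "T > 0"
  shows "Mm T p j k = p_avg T p j * p_avg T p k + Cm T p j k"
proof -
  let ?A = "\<lambda>t. if j = k then p t j else 0" and ?B = "\<lambda>t s. p t j * p s k"
  have row: "(\<Sum>s<T. if t = s then ?A t else ?B t s) = (\<Sum>s<T. ?B t s) + cc (p t) j k" if "t < T" for t
  proof -
    have "(\<Sum>s<T. if t = s then ?A t else ?B t s) = (\<Sum>s<T. ?B t s + (if t = s then ?A t - ?B t t else 0))"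
      by (intro sum.cong refl) auto
    also have "\<dots> = (\<Sum>s<T. ?B t s) + (?A t - ?B t t)"
      using that by (simp add: sum.distrib)
    finally show ?thesis by (simp add: cc_def)
  qed
  have "(\<Sum>t<T. \<Sum>s<T. if t = s then ?A t else ?B t s) = (\<Sum>t<T. (\<Sum>s<T. ?B t s) + cc (p t) j k)"
    using row by (intro sum.cong refl) auto
  also have "\<dots> = (\<Sum>t<T. p t j) * (\<Sum>s<T. p s k) + (\<Sum>t<T. cc (p t) j k)"
    by (simp add: sum.distrib sum_product)
  finally have e: "(\<Sum>t<T. \<Sum>s<T. if t = s then ?A t else ?B t s) = (\<Sum>t<T. p t j) * (\<Sum>s<T. p s k) + (\<Sum>t<T. cc (p t) j k)" .
  show ?thesis
    unfolding Mm_def e Cm_def p_avg_def using assms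
    by (simp add: field_simps power2_eq_square)
qed

lemma var_expand:
  fixes q :: "nat \<Rightarrow> real"
  assumes "T > 0"
  shows "(\<Sum>j<d. \<Sum>k<d. (Mm T p j k)^2 / (q j * q k))
     = (\<Sum>j<d. (p_avg T p j)^2 / q j)^2
       + 2 * (\<Sum>j<d. \<Sum>k<d. (p_avg T p j / q j) * (p_avg T p k / q k) * Cm T p j k)
       + (\<Sum>j<d. \<Sum>k<d. (Cm T p j k)^2 / (q j * q k))"
proof -
  let ?P = "p_avg T p"
  have "(\<Sum>j<d. \<Sum>k<d. (Mm T p j k)^2 / (q j * q k))
     = (\<Sum>j<d. \<Sum>k<d. (?P j ^2 / q j) * (?P k ^2 / q k)
            + 2 * ((?P j / q j) * (?P k / q k) * Cm T p j k) + (Cm T p j k)^2 / (q j * q k))"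
    unfolding Mm_decomp[OF assms]
    by (intro sum.cong refl) (simp add: power2_eq_square field_simps add_divide_distrib)
  also have "\<dots> = (\<Sum>j<d. ?P j ^2 / q j)^2
       + 2 * (\<Sum>j<d. \<Sum>k<d. (?P j / q j) * (?P k / q k) * Cm T p j k)
       + (\<Sum>j<d. \<Sum>k<d. (Cm T p j k)^2 / (q j * q k))"
  proof -
    have sq: "(\<Sum>j<d. ?P j ^2 / q j)^2 = (\<Sum>j<d. \<Sum>k<d. (?P j ^2 / q j) * (?P k ^2 / q k))"
      by (simp only: power2_eq_square[of "sum _ _"] sum_product)
    show ?thesis unfolding sq by (simp only: sum.distrib sum_distrib_left)
  qed
  finally show ?thesis .
qed

lemma swap3:
  "(\<Sum>k\<in>B. \<Sum>t\<in>C. \<Sum>s\<in>D. f k t s) = (\<Sum>t\<in>C. \<Sum>s\<in>D. \<Sum>k\<in>B. (f k t s :: real))"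
proof -
  have "(\<Sum>k\<in>B. \<Sum>t\<in>C. (\<Sum>s\<in>D. f k t s)) = (\<Sum>t\<in>C. \<Sum>k\<in>B. (\<Sum>s\<in>D. f k t s))"
    by (rule sum.swap)
  also have "\<dots> = (\<Sum>t\<in>C. \<Sum>s\<in>D. \<Sum>k\<in>B. f k t s)"
    by (rule sum.cong[OF refl]) (rule sum.swap)
  finally show ?thesis .
qed

lemma swap4:
  "(\<Sum>j\<in>A. \<Sum>k\<in>B. \<Sum>t\<in>C. \<Sum>s\<in>D. f j k t s) = (\<Sum>t\<in>C. \<Sum>s\<in>D. \<Sum>j\<in>A. \<Sum>k\<in>B. (f j k t s :: real))"
proof -
  have "(\<Sum>j\<in>A. \<Sum>k\<in>B. \<Sum>t\<in>C. \<Sum>s\<in>D. f j k t s) = (\<Sum>j\<in>A. \<Sum>t\<in>C. \<Sum>s\<in>D. \<Sum>k\<in>B. f j k t s)"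
    by (rule sum.cong[OF refl]) (rule swap3)
  also have "\<dots> = (\<Sum>t\<in>C. \<Sum>s\<in>D. \<Sum>j\<in>A. \<Sum>k\<in>B. f j k t s)"
    by (rule swap3)
  finally show ?thesis .
qed

lemma term1_bound:
  fixes r :: "nat \<Rightarrow> real"
  assumes "dists d T p" "T > 0"
  shows "(\<Sum>j<d. \<Sum>k<d. r j * r k * Cm T p j k) \<le> (\<Sum>j<d. p_avg T p j * (r j - 1)^2) / real T"
proof -
  have "(\<Sum>j<d. \<Sum>k<d. r j * r k * Cm T p j k) = (\<Sum>j<d. \<Sum>k<d. \<Sum>t<T. r j * r k * cc (p t) j k / (real T)^2)"
    unfolding Cm_def by (simp add: sum_distrib_left sum_divide_distrib)
  also have "\<dots> = (\<Sum>t<T. \<Sum>j<d. \<Sum>k<d. r j * r k * cc (p t) j k) / (real T)^2"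
    by (simp add: sum_divide_distrib sum.swap[of _ "{..<T}"])
  also have "\<dots> \<le> (\<Sum>t<T. \<Sum>j<d. p t j * (r j - 1)^2) / (real T)^2"
  proof (rule divide_right_mono, rule sum_mono)
    fix t assume "t \<in> {..<T}"
    then have "is_dist d (p t)" using assms by (simp add: dists_def)
    then show "(\<Sum>j<d. \<Sum>k<d. r j * r k * cc (p t) j k) \<le> (\<Sum>j<d. p t j * (r j - 1)^2)"
      unfolding rr_cc by (rule var_single)
  qed simp
  also have "\<dots> = (\<Sum>j<d. (\<Sum>t<T. p t j) * (r j - 1)^2) / (real T)^2"
    by (simp add: sum_distrib_right sum.swap[of _ "{..<T}"])
  also have "\<dots> = (\<Sum>j<d. p_avg T p j * (r j - 1)^2) / real T"
    using assms(2) by (simp add: p_avg_def power2_eq_square sum_divide_distrib[symmetric] field_simps)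
  finally show ?thesis .
qed

lemma term2_bound:
  fixes q :: "nat \<Rightarrow> real"
  assumes "dists d T p" "T > 0" "\<forall>j<d. 0 < q j"
  shows "(\<Sum>j<d. \<Sum>k<d. (Cm T p j k)^2 / (q j * q k)) \<le> 2 * (\<Sum>j<d. (p_avg T p j / q j)^2) / (real T)^2"
proof -
  have "(\<Sum>j<d. \<Sum>k<d. (Cm T p j k)^2 / (q j * q k))
      = (\<Sum>j<d. \<Sum>k<d. \<Sum>t<T. \<Sum>s<T. cc (p t) j k * cc (p s) j k / (q j * q k) / (real T)^4)"
  proof (intro sum.cong refl)
    fix j k
    have "(Cm T p j k)^2 = (\<Sum>t<T. cc (p t) j k) * (\<Sum>s<T. cc (p s) j k) / (real T)^4"
      by (simp add: Cm_def power2_eq_square power4_eq_xxxx)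
    also have "\<dots> = (\<Sum>t<T. \<Sum>s<T. cc (p t) j k * cc (p s) j k) / (real T)^4"
      by (simp only: sum_product)
    finally show "(Cm T p j k)^2 / (q j * q k) = (\<Sum>t<T. \<Sum>s<T. cc (p t) j k * cc (p s) j k / (q j * q k) / (real T)^4)"
      by (simp only: sum_divide_distrib[symmetric]) (simp add: divide_divide_eq_left mult.commute)
  qed
  also have "\<dots> = (\<Sum>t<T. \<Sum>s<T. \<Sum>j<d. \<Sum>k<d. cc (p t) j k * cc (p s) j k / (q j * q k)) / (real T)^4"
    by (simp only: sum_divide_distrib[symmetric] swap4)
  also have "\<dots> \<le> (\<Sum>t<T. \<Sum>s<T. 2 * (\<Sum>j<d. p t j * p s j / (q j)^2)) / (real T)^4"
  proof (rule divide_right_mono, rule sum_mono, rule sum_mono)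
    fix t s assume "t \<in> {..<T}" "s \<in> {..<T}"
    then show "(\<Sum>j<d. \<Sum>k<d. cc (p t) j k * cc (p s) j k / (q j * q k)) \<le> 2 * (\<Sum>j<d. p t j * p s j / (q j)^2)"
      using assms by (intro cc_single) (auto simp: dists_def)
  qed simp
  also have "\<dots> = 2 * (\<Sum>j<d. (\<Sum>t<T. p t j) * (\<Sum>s<T. p s j) / (q j)^2) / (real T)^4"
  proof -
    have "(\<Sum>j<d. (\<Sum>t<T. p t j) * (\<Sum>s<T. p s j) / (q j)^2) = (\<Sum>j<d. \<Sum>t<T. \<Sum>s<T. p t j * p s j / (q j)^2)"
      by (simp only: sum_product sum_divide_distrib)
    also have "\<dots> = (\<Sum>t<T. \<Sum>s<T. \<Sum>j<d. p t j * p s j / (q j)^2)"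
      by (rule swap3)
    finally show ?thesis by (simp add: sum_distrib_left)
  qed
  also have "\<dots> = 2 * (\<Sum>j<d. (p_avg T p j / q j)^2) / (real T)^2"
  proof -
    have "(\<Sum>j<d. (p_avg T p j / q j)^2) = (\<Sum>j<d. (\<Sum>t<T. p t j) * (\<Sum>s<T. p s j) / (q j)^2 / (real T)^2)"
      unfolding p_avg_def using assms(2,3) by (intro sum.cong refl) (auto simp: field_simps power2_eq_square)
    also have "\<dots> = (\<Sum>j<d. (\<Sum>t<T. p t j) * (\<Sum>s<T. p s j) / (q j)^2) / (real T)^2"
      by (simp only: sum_divide_distrib)
    finally have "(\<Sum>j<d. (p_avg T p j / q j)^2) = (\<Sum>j<d. (\<Sum>t<T. p t j) * (\<Sum>s<T. p s j) / (q j)^2) / (real T)^2" .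
    then show ?thesis by (simp add: power4_eq_xxxx power2_eq_square)
  qed
  finally show ?thesis .
qed



lemma sum_pavg:
  assumes "dists d T p" "T > 0"
  shows "(\<Sum>j<d. p_avg T p j) = 1"
proof -
  have "(\<Sum>j<d. p_avg T p j) = (\<Sum>t<T. \<Sum>j<d. p t j) / real T"
    unfolding p_avg_def by (simp add: sum_divide_distrib[symmetric] sum.swap[of _ "{..<T}"])
  also have "\<dots> = (\<Sum>t<T. 1) / real T"
    using assms(1) by (intro arg_cong[where f="\<lambda>x. x / real T"] sum.cong refl) (auto simp: dists_def is_dist_def)
  finally show ?thesis using assms(2) by simp
qed

lemma mean_eq:
  assumes "dists d T p" "T > 0" "is_dist d q" "\<forall>j<d. 0 < q j"
  shows "(\<Sum>j<d. (p_avg T p j)^2 / q j) = 1 + chi2 d (p_avg T p) q"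
proof -
  let ?P = "p_avg T p"
  have "chi2 d ?P q = (\<Sum>j<d. (?P j)^2 / q j - 2 * ?P j + q j)"
    unfolding chi2_def using assms(4)
    by (intro sum.cong refl) (auto simp: field_simps power2_eq_square)
  also have "\<dots> = (\<Sum>j<d. (?P j)^2 / q j) - 2 * (\<Sum>j<d. ?P j) + (\<Sum>j<d. q j)"
    by (simp add: sum.distrib sum_subtractf sum_distrib_left)
  finally show ?thesis using sum_pavg[OF assms(1,2)] assms(3) by (simp add: is_dist_def)
qed

lemma chi2_nonneg:
  assumes "\<forall>j<d. 0 < q j"
  shows "0 \<le> chi2 d P q"
  unfolding chi2_def using assms by (intro sum_nonneg) auto

lemma delta_bound:
  fixes P q :: "nat \<Rightarrow> real"
  assumes "\<forall>j<d. 0 < q j" "\<forall>j<d. g \<le> q j" "0 < g" "j < d"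
  shows "((P j - q j) / q j)^2 \<le> chi2 d P q / g"
proof -
  have q: "0 < q j" "g \<le> q j" using assms by auto
  have "g * ((P j - q j) / q j)^2 \<le> q j * ((P j - q j) / q j)^2"
    using q by (intro mult_right_mono) auto
  also have "q j * ((P j - q j) / q j)^2 = (P j - q j)^2 / q j"
    using q by (simp add: power2_eq_square field_simps)
  also have "(P j - q j)^2 / q j \<le> chi2 d P q"
    unfolding chi2_def using assms by (intro member_le_sum) auto
  finally have "g * ((P j - q j) / q j)^2 \<le> chi2 d P q" .
  then show ?thesis using assms(3) by (simp add: pos_le_divide_eq mult.commute)
qed

lemma E1_bound:
  fixes P q :: "nat \<Rightarrow> real"
  assumes "\<forall>j<d. 0 < q j" "\<forall>j<d. g \<le> q j" "0 < g"
  shows "(\<Sum>j<d. P j * (P j / q j - 1)^2) \<le> chi2 d P q + chi2 d P q * sqrt (chi2 d P q / g)"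
proof -
  let ?c = "chi2 d P q"
  have "(\<Sum>j<d. P j * (P j / q j - 1)^2) \<le> (\<Sum>j<d. (P j - q j)^2 / q j * (1 + sqrt (?c / g)))"
  proof (rule sum_mono)
    fix j assume j: "j \<in> {..<d}"
    let ?dl = "(P j - q j) / q j"
    have q: "0 < q j" using assms j by auto
    have e: "P j * (P j / q j - 1)^2 = (P j - q j)^2 / q j * (1 + ?dl)"
      using q by (simp add: field_simps power2_eq_square)
    have "?dl \<le> \<bar>?dl\<bar>" by (rule abs_ge_self)
    also have "\<bar>?dl\<bar> = sqrt (?dl^2)" by simp
    also have "\<dots> \<le> sqrt (?c / g)"
      using delta_bound[OF assms, of j P] j by (intro real_sqrt_le_mono) auto
    finally have "?dl \<le> sqrt (?c / g)" .
    then show "P j * (P j / q j - 1)^2 \<le> (P j - q j)^2 / q j * (1 + sqrt (?c / g))"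
      unfolding e using q by (intro mult_left_mono) auto
  qed
  also have "\<dots> = ?c + ?c * sqrt (?c / g)"
    unfolding chi2_def by (simp only: distrib_left mult_1_right sum.distrib sum_distrib_right)
  finally show ?thesis .
qed

lemma E2_bound:
  fixes P q :: "nat \<Rightarrow> real"
  assumes "\<forall>j<d. 0 < q j" "\<forall>j<d. g \<le> q j" "0 < g"
  shows "(\<Sum>j<d. (P j / q j)^2) \<le> 2 * real d + 2 * (chi2 d P q / g)"
proof -
  have "(\<Sum>j<d. (P j / q j)^2) \<le> (\<Sum>j<d. 2 + 2 * ((P j - q j)^2 / q j) / g)"
  proof (rule sum_mono)
    fix j assume j: "j \<in> {..<d}"
    let ?dl = "(P j - q j) / q j"
    have q: "0 < q j" "g \<le> q j" using assms j by auto
    have e: "P j / q j = 1 + ?dl" using q by (simp add: field_simps)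
    have sq: "(1 + x)^2 \<le> 2 + 2 * x^2" for x :: real
    proof -
      have "0 \<le> (1 - x)^2" by simp
      moreover have "(1 + x)^2 = 2 + 2 * x^2 - (1 - x)^2" by (simp add: power2_eq_square algebra_simps)
      ultimately show ?thesis by linarith
    qed
    have "(1 + ?dl)^2 \<le> 2 + 2 * ?dl^2" by (rule sq)
    moreover have "?dl^2 \<le> ((P j - q j)^2 / q j) / g"
    proof -
      have "g * ?dl^2 \<le> q j * ?dl^2" using q by (intro mult_right_mono) auto
      also have "q j * ?dl^2 = (P j - q j)^2 / q j" using q by (simp add: power2_eq_square field_simps)
      finally have "g * ?dl^2 \<le> (P j - q j)^2 / q j" .
      then show ?thesis using assms(3) by (subst pos_le_divide_eq) (auto simp only: mult.commute)
    qed
    ultimately show "(P j / q j)^2 \<le> 2 + 2 * ((P j - q j)^2 / q j) / g"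
      unfolding e by linarith
  qed
  also have "\<dots> = 2 * real d + 2 * (chi2 d P q / g)"
    unfolding chi2_def by (simp add: sum.distrib sum_distrib_left sum_divide_distrib)
  finally show ?thesis .
qed

lemma var_bound:
  assumes "dists d T p" "T > 0" "\<forall>j<d. 0 < q j" "\<forall>j<d. g \<le> q j" "0 < g"
  shows "(\<Sum>j<d. \<Sum>k<d. (Mm T p j k)^2 / (q j * q k)) - (\<Sum>j<d. (p_avg T p j)^2 / q j)^2
     \<le> 2 * (chi2 d (p_avg T p) q + chi2 d (p_avg T p) q * sqrt (chi2 d (p_avg T p) q / g)) / real T
       + 2 * (2 * real d + 2 * (chi2 d (p_avg T p) q / g)) / (real T)^2"
proof -
  let ?P = "p_avg T p"
  have t1: "(\<Sum>j<d. \<Sum>k<d. (?P j / q j) * (?P k / q k) * Cm T p j k) \<le> (\<Sum>j<d. ?P j * (?P j / q j - 1)^2) / real T"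
    by (rule term1_bound[OF assms(1,2)])
  have t2: "(\<Sum>j<d. \<Sum>k<d. (Cm T p j k)^2 / (q j * q k)) \<le> 2 * (\<Sum>j<d. (?P j / q j)^2) / (real T)^2"
    by (rule term2_bound[OF assms(1,2,3)])
  have e1: "(\<Sum>j<d. ?P j * (?P j / q j - 1)^2) / real T \<le> (chi2 d ?P q + chi2 d ?P q * sqrt (chi2 d ?P q / g)) / real T"
    by (intro divide_right_mono E1_bound[OF assms(3,4,5)]) simp
  have e2: "2 * (\<Sum>j<d. (?P j / q j)^2) / (real T)^2 \<le> 2 * (2 * real d + 2 * (chi2 d ?P q / g)) / (real T)^2"
    by (intro divide_right_mono mult_left_mono E2_bound[OF assms(3,4,5)]) auto
  show ?thesis
    unfolding var_expand[OF assms(2)] using t1 t2 e1 e2 by linarith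
qed



lemma arith_final:
  fixes T d th g c K :: real
  assumes K: "1 \<le> K" and T: "0 < T" and d: "1 \<le> d" and th: "0 < th" and g: "0 < g" and c: "0 \<le> c"
    and h1: "K * sqrt d / th \<le> T" and h2: "K / sqrt (th * g) \<le> T"
  shows "2 * (c + c * sqrt (c / g)) / T + 2 * (2 * d + 2 * (c / g)) / T^2 \<le> 4 * (c + th)^2 / K"
proof -
  have K0: "0 < K" using K by simp
  have sd: "1 \<le> sqrt d" using d by simp
  have A1: "K * sqrt d \<le> T * th" using h1 th by (simp add: pos_divide_le_eq)
  have A: "K \<le> T * th" using A1 sd K0 by (smt (verit) mult_le_cancel_left1)
  have B: "K^2 * d \<le> (T * th)^2"
  proof -
    have "(K * sqrt d)^2 \<le> (T * th)^2" using A1 K0 sd by (intro power_mono) auto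
    then show ?thesis using d by (simp add: power_mult_distrib)
  qed
  have sg: "0 < sqrt (th * g)" using th g by simp
  have C1: "K \<le> T * sqrt (th * g)" using h2 sg by (simp add: pos_divide_le_eq)
  have C: "K^2 \<le> T^2 * (th * g)"
  proof -
    have "K^2 \<le> (T * sqrt (th * g))^2" using C1 K0 by (intro power_mono) auto
    then show ?thesis using th g by (simp add: power_mult_distrib)
  qed
  have t1: "2 * c / T \<le> 2 * c * th / K"
  proof -
    have "2 * c / T = 2 * c * th / (T * th)" using th by simp
    also have "\<dots> \<le> 2 * c * th / K" using A K0 c th by (intro divide_left_mono) auto
    finally show ?thesis .
  qed
  have am: "sqrt (c * th) \<le> (c + th) / 2"
  proof -
    have "0 \<le> (sqrt c - sqrt th)^2" by simp
    also have "(sqrt c - sqrt th)^2 = c + th - 2 * sqrt (c * th)"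
      using c th by (simp add: power2_eq_square algebra_simps real_sqrt_mult)
    finally show ?thesis by simp
  qed
  have t2: "2 * c * sqrt (c / g) / T \<le> c * (c + th) / K"
  proof -
    have "sqrt (c / g) = sqrt (c * th) / sqrt (th * g)"
      using th g by (simp add: real_sqrt_mult real_sqrt_divide field_simps)
    then have "2 * c * sqrt (c / g) / T = 2 * c * sqrt (c * th) / (T * sqrt (th * g))" by simp
    also have "\<dots> \<le> 2 * c * sqrt (c * th) / K"
      using C1 K0 c th by (intro divide_left_mono) auto
    also have "\<dots> \<le> 2 * c * ((c + th) / 2) / K"
      using am c K0 by (intro divide_right_mono mult_left_mono) auto
    finally show ?thesis by simp
  qed
  have t3: "d / T^2 \<le> th^2 / K^2"
    using B T K0 by (simp add: field_simps power_mult_distrib)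
  have t4: "c / g / T^2 \<le> c * th / K^2"
  proof -
    have "c * K^2 \<le> c * (T^2 * (th * g))" using C c by (rule mult_left_mono)
    then show ?thesis using T K0 g by (simp add: field_simps)
  qed
  have k2: "x / K^2 \<le> x / K" if "0 \<le> x" for x
    using that K K0 by (intro divide_left_mono) (auto simp: power2_eq_square)
  have "2 * (c + c * sqrt (c / g)) / T + 2 * (2 * d + 2 * (c / g)) / T^2
      = 2 * c / T + 2 * c * sqrt (c / g) / T + 4 * (d / T^2) + 4 * (c / g / T^2)"
    using T g by (simp add: field_simps)
  also have "\<dots> \<le> 2 * c * th / K + c * (c + th) / K + 4 * (th^2 / K^2) + 4 * (c * th / K^2)"
    using t1 t2 t3 t4 by linarith
  also have "\<dots> \<le> 2 * c * th / K + c * (c + th) / K + 4 * (th^2 / K) + 4 * (c * th / K)"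
    using k2[of "th^2"] k2[of "c * th"] c th by auto
  also have "\<dots> = (c^2 + 7 * c * th + 4 * th^2) / K"
    using K0 by (simp add: field_simps power2_eq_square)
  also have "\<dots> \<le> 4 * (c + th)^2 / K"
    using K0 c th by (intro divide_right_mono) (auto simp: power2_eq_square algebra_simps)
  finally show ?thesis .
qed



definition phi :: "nat \<Rightarrow> (nat \<Rightarrow> nat \<Rightarrow> nat) \<Rightarrow> (nat \<Rightarrow> nat) \<times> (nat \<Rightarrow> nat)" where
  "phi T s = (restrict (\<lambda>t. s t 0) {..<T}, restrict (\<lambda>t. s t 1) {..<T})"

definition psi :: "nat \<Rightarrow> (nat \<Rightarrow> nat) \<times> (nat \<Rightarrow> nat) \<Rightarrow> (nat \<Rightarrow> nat \<Rightarrow> nat)" where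
  "psi T xy = restrict (\<lambda>t. restrict (\<lambda>i. if i = 0 then fst xy t else snd xy t) {..<2}) {..<T}"

lemma phi_bij:
  "bij_betw (phi T) (sample_space d T 2) (PiE {..<T} (\<lambda>_. {..<d}) \<times> PiE {..<T} (\<lambda>_. {..<d}))"
proof (rule bij_betw_byWitness[where f' = "psi T"])
  show "\<forall>s\<in>sample_space d T 2. psi T (phi T s) = s"
  proof
    fix s assume s: "s \<in> sample_space d T 2"
    show "psi T (phi T s) = s"
    proof (rule ext)
      fix t show "psi T (phi T s) t = s t"
      proof (cases "t < T")
        case True
        then have st: "s t \<in> PiE {..<2} (\<lambda>_. {..<d})" using s by (auto simp: sample_space_def)
        show ?thesis
        proof (rule ext)
          fix i show "psi T (phi T s) t i = s t i"
          proof (cases "i < 2")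
            case True
            then have "i = 0 \<or> i = 1" by auto
            then show ?thesis using \<open>t < T\<close> True by (auto simp: psi_def phi_def)
          next
            case False
            then show ?thesis using st \<open>t < T\<close> by (auto simp: psi_def phi_def PiE_def extensional_def)
          qed
        qed
      next
        case False
        then show ?thesis using s by (auto simp: psi_def sample_space_def PiE_def extensional_def)
      qed
    qed
  qed
  show "\<forall>xy\<in>PiE {..<T} (\<lambda>_. {..<d}) \<times> PiE {..<T} (\<lambda>_. {..<d}). phi T (psi T xy) = xy"
  proof
    fix xy assume xy: "xy \<in> PiE {..<T} (\<lambda>_. {..<d}) \<times> PiE {..<T} (\<lambda>_. {..<d})"
    obtain x y where e: "xy = (x, y)" by force
    have x: "x \<in> PiE {..<T} (\<lambda>_. {..<d})" and y: "y \<in> PiE {..<T} (\<lambda>_. {..<d})" using xy e by auto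
    have "restrict (\<lambda>t. psi T (x, y) t 0) {..<T} = x"
      using x by (intro ext) (auto simp: psi_def PiE_def extensional_def)
    moreover have "restrict (\<lambda>t. psi T (x, y) t 1) {..<T} = y"
      using y by (intro ext) (auto simp: psi_def PiE_def extensional_def)
    ultimately show "phi T (psi T xy) = xy" by (simp add: e phi_def)
  qed
  show "phi T ` sample_space d T 2 \<subseteq> PiE {..<T} (\<lambda>_. {..<d}) \<times> PiE {..<T} (\<lambda>_. {..<d})"
  proof
    fix z assume "z \<in> phi T ` sample_space d T 2"
    then obtain s where s: "s \<in> sample_space d T 2" and z: "z = phi T s" by auto
    have "\<forall>t<T. \<forall>i<2. s t i < d" using s by (auto simp: sample_space_def PiE_iff)
    then show "z \<in> PiE {..<T} (\<lambda>_. {..<d}) \<times> PiE {..<T} (\<lambda>_. {..<d})"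
      unfolding z phi_def by auto
  qed
  show "psi T ` (PiE {..<T} (\<lambda>_. {..<d}) \<times> PiE {..<T} (\<lambda>_. {..<d})) \<subseteq> sample_space d T 2"
  proof
    fix z assume "z \<in> psi T ` (PiE {..<T} (\<lambda>_. {..<d}) \<times> PiE {..<T} (\<lambda>_. {..<d}))"
    then obtain x y where x: "x \<in> PiE {..<T} (\<lambda>_. {..<d})" and y: "y \<in> PiE {..<T} (\<lambda>_. {..<d})"
      and z: "z = psi T (x, y)" by auto
    have "\<forall>t<T. x t < d \<and> y t < d" using x y by (auto simp: PiE_iff)
    then show "z \<in> sample_space d T 2"
      unfolding z psi_def sample_space_def by (auto simp: PiE_iff)
  qed
qed

lemma sample_prob_phi:
  assumes "s \<in> sample_space d T 2"
  shows "sample_prob T 2 p s = (\<Prod>t<T. p t (fst (phi T s) t)) * (\<Prod>t<T. p t (snd (phi T s) t))"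
proof -
  have "sample_prob T 2 p s = (\<Prod>t<T. p t (s t 0) * p t (s t 1))"
    unfolding sample_prob_def by (simp add: numeral_2_eq_2 lessThan_Suc mult.commute)
  also have "\<dots> = (\<Prod>t<T. p t (fst (phi T s) t)) * (\<Prod>t<T. p t (snd (phi T s) t))"
    by (simp add: prod.distrib phi_def)
  finally show ?thesis .
qed

lemma accept_bridge:
  "accept_prob d T 2 p (\<lambda>s. G (fst (phi T s)) (snd (phi T s)))
   = expx d T p (\<lambda>x. expx d T p (\<lambda>y. G x y))"
proof -
  let ?X = "PiE {..<T} (\<lambda>_. {..<d})"
  let ?H = "\<lambda>xy. (\<Prod>t<T. p t (fst xy t)) * (\<Prod>t<T. p t (snd xy t)) * G (fst xy) (snd xy)"
  have "accept_prob d T 2 p (\<lambda>s. G (fst (phi T s)) (snd (phi T s))) = (\<Sum>s\<in>sample_space d T 2. ?H (phi T s))"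
    unfolding accept_prob_def by (intro sum.cong refl) (simp add: sample_prob_phi)
  also have "\<dots> = (\<Sum>xy\<in>?X \<times> ?X. ?H xy)"
    by (rule sum.reindex_bij_betw[OF phi_bij])
  also have "\<dots> = (\<Sum>x\<in>?X. \<Sum>y\<in>?X. ?H (x, y))"
    by (subst sum.cartesian_product) (simp add: case_prod_unfold)
  also have "\<dots> = expx d T p (\<lambda>x. expx d T p (\<lambda>y. G x y))"
    unfolding expx_def sum_distrib_left by (intro sum.cong refl) (simp add: mult_ac)
  finally show ?thesis .
qed



lemma E2_mono:
  assumes "dists d T p" "\<And>x y. F x y \<le> H x y"
  shows "expx d T p (\<lambda>x. expx d T p (\<lambda>y. F x y)) \<le> expx d T p (\<lambda>x. expx d T p (\<lambda>y. H x y))"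
  using assms by (intro expx_mono expx_mono) auto

lemma E2_var:
  assumes "dists d T p" "T > 0" "is_dist d q" "\<forall>j<d. 0 < q j"
  shows "expx d T p (\<lambda>x. expx d T p (\<lambda>y. (Zs d T q x y - (1 + chi2 d (p_avg T p) q))^2))
       = (\<Sum>j<d. \<Sum>k<d. (Mm T p j k)^2 / (q j * q k)) - (\<Sum>j<d. (p_avg T p j)^2 / q j)^2"
proof -
  let ?m = "1 + chi2 d (p_avg T p) q"
  have sq: "(Zs d T q x y - ?m)^2 = (Zs d T q x y)^2 - 2 * ?m * Zs d T q x y + ?m^2" for x y
    by (simp add: power2_eq_square algebra_simps)
  have inner: "expx d T p (\<lambda>y. (Zs d T q x y - ?m)^2)
      = expx d T p (\<lambda>y. (Zs d T q x y)^2) - 2 * ?m * expx d T p (\<lambda>y. Zs d T q x y) + ?m^2" for x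
    unfolding sq by (simp only: expx_add expx_diff expx_cmult expx_const[OF assms(1)])
  have "expx d T p (\<lambda>x. expx d T p (\<lambda>y. (Zs d T q x y - ?m)^2))
     = expx d T p (\<lambda>x. expx d T p (\<lambda>y. (Zs d T q x y)^2)) - 2 * ?m * expx d T p (\<lambda>x. expx d T p (\<lambda>y. Zs d T q x y)) + ?m^2"
    unfolding inner by (simp only: expx_add expx_diff expx_cmult expx_const[OF assms(1)])
  also have "\<dots> = (\<Sum>j<d. \<Sum>k<d. (Mm T p j k)^2 / (q j * q k)) - 2 * ?m * ?m + ?m^2"
    unfolding E2_Z2[OF assms(1)] E2_Z[OF assms(1)] mean_eq[OF assms] ..
  also have "\<dots> = (\<Sum>j<d. \<Sum>k<d. (Mm T p j k)^2 / (q j * q k)) - (\<Sum>j<d. (p_avg T p j)^2 / q j)^2"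
    unfolding mean_eq[OF assms] by (simp add: power2_eq_square)
  finally show ?thesis .
qed

theorem theorem2p2:
  shows "\<exists>K::real>0. \<forall>(d::nat) (q::nat \<Rightarrow> real) (\<theta>::real) (T::nat).
     is_dist d q \<and> (\<forall>j<d. 0 < q j) \<and> 0 < \<theta> \<and>
     real T \<ge> K * max (sqrt (real d) / \<theta>) (1 / sqrt (\<theta> * Min (q ` {..<d})))
     \<longrightarrow> (\<exists>A :: (nat \<Rightarrow> nat \<Rightarrow> nat) \<Rightarrow> real.
            (\<forall>s. 0 \<le> A s \<and> A s \<le> 1) \<and>
            (\<forall>p :: nat \<Rightarrow> nat \<Rightarrow> real. (\<forall>t<T. is_dist d (p t)) \<longrightarrow>
               (chi2 d (p_avg T p) q \<le> 0.99 * \<theta> \<longrightarrow> accept_prob d T 2 p A \<ge> 0.99) \<and>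
               (chi2 d (p_avg T p) q > \<theta> \<longrightarrow> 1 - accept_prob d T 2 p A \<ge> 0.99)))"
proof (intro exI[of _ "10^9"] conjI allI impI)
  let ?K = "10^9 :: real"
  show "(0::real) < 10^9" by simp
  fix d :: nat and q :: "nat \<Rightarrow> real" and \<theta> :: real and T :: nat
  assume H: "is_dist d q \<and> (\<forall>j<d. 0 < q j) \<and> 0 < \<theta> \<and>
     real T \<ge> ?K * max (sqrt (real d) / \<theta>) (1 / sqrt (\<theta> * Min (q ` {..<d})))"
  then have qd: "is_dist d q" and qpos: "\<forall>j<d. 0 < q j" and th: "0 < \<theta>"
    and HT: "real T \<ge> ?K * max (sqrt (real d) / \<theta>) (1 / sqrt (\<theta> * Min (q ` {..<d})))"
    by auto
  define g where "g = Min (q ` {..<d})"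
  have d1: "1 \<le> d"
  proof (rule ccontr)
    assume "\<not> 1 \<le> d" then have "d = 0" by simp
    then show False using qd by (simp add: is_dist_def)
  qed
  have "0 \<in> {..<d}" using d1 by simp
  then have gin: "g \<in> q ` {..<d}" unfolding g_def by (intro Min_in) auto
  then have g0: "0 < g" using qpos by auto
  have gle: "\<forall>j<d. g \<le> q j" unfolding g_def by (auto intro: Min_le)
  have sd: "0 < sqrt (real d) / \<theta>" using d1 th by simp
  have m1: "?K * (sqrt (real d) / \<theta>) \<le> ?K * max (sqrt (real d) / \<theta>) (1 / sqrt (\<theta> * g))"
    by (intro mult_left_mono) auto
  have m2: "?K * (1 / sqrt (\<theta> * g)) \<le> ?K * max (sqrt (real d) / \<theta>) (1 / sqrt (\<theta> * g))"
    by (intro mult_left_mono) auto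
  have HT': "?K * max (sqrt (real d) / \<theta>) (1 / sqrt (\<theta> * g)) \<le> real T"
    using HT unfolding g_def .
  have h1: "?K * sqrt (real d) / \<theta> \<le> real T"
    using m1 HT' by simp
  have h2: "?K / sqrt (\<theta> * g) \<le> real T"
    using m2 HT' by simp
  have "0 < ?K * sqrt (real d) / \<theta>" using d1 th by simp
  then have Tpos: "0 < real T" using h1 by linarith
  then have T0: "T > 0" by simp
  define G where "G = (\<lambda>x y. if Zs d T q x y \<le> 1 + 0.995 * \<theta> then (1::real) else 0)"
  show "\<exists>A :: (nat \<Rightarrow> nat \<Rightarrow> nat) \<Rightarrow> real.
            (\<forall>s. 0 \<le> A s \<and> A s \<le> 1) \<and>
            (\<forall>p :: nat \<Rightarrow> nat \<Rightarrow> real. (\<forall>t<T. is_dist d (p t)) \<longrightarrow>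
               (chi2 d (p_avg T p) q \<le> 0.99 * \<theta> \<longrightarrow> accept_prob d T 2 p A \<ge> 0.99) \<and>
               (chi2 d (p_avg T p) q > \<theta> \<longrightarrow> 1 - accept_prob d T 2 p A \<ge> 0.99))"
  proof (intro exI[of _ "\<lambda>s. G (fst (phi T s)) (snd (phi T s))"] conjI allI impI)
    fix s show "0 \<le> G (fst (phi T s)) (snd (phi T s))" "G (fst (phi T s)) (snd (phi T s)) \<le> 1"
      by (auto simp: G_def)
  next
    fix p :: "nat \<Rightarrow> nat \<Rightarrow> real"
    assume "\<forall>t<T. is_dist d (p t)"
    then have pd: "dists d T p" by (simp add: dists_def)
    let ?c = "chi2 d (p_avg T p) q"
    let ?m = "1 + ?c"
    let ?V = "expx d T p (\<lambda>x. expx d T p (\<lambda>y. (Zs d T q x y - ?m)^2))"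
    have c0: "0 \<le> ?c" by (rule chi2_nonneg[OF qpos])
    have V: "?V \<le> 4 * (?c + \<theta>)^2 / ?K"
    proof -
      have "?V \<le> 2 * (?c + ?c * sqrt (?c / g)) / real T + 2 * (2 * real d + 2 * (?c / g)) / (real T)^2"
        unfolding E2_var[OF pd T0 qd qpos] by (rule var_bound[OF pd T0 qpos gle g0])
      also have "\<dots> \<le> 4 * (?c + \<theta>)^2 / ?K"
        by (rule arith_final) (use d1 th g0 c0 Tpos h1 h2 in auto)
      finally show ?thesis .
    qed
    have acc: "accept_prob d T 2 p (\<lambda>s. G (fst (phi T s)) (snd (phi T s))) = expx d T p (\<lambda>x. expx d T p (\<lambda>y. G x y))"
      by (rule accept_bridge)
    {
      assume cs: "?c \<le> 0.99 * \<theta>"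
      let ?a = "0.005 * \<theta>"
      have a0: "0 < ?a" using th by simp
      have pt: "1 - G x y \<le> (Zs d T q x y - ?m)^2 / ?a^2" for x y
      proof (cases "Zs d T q x y \<le> 1 + 0.995 * \<theta>")
        case True then show ?thesis by (simp add: G_def)
      next
        case False
        then have "?a \<le> Zs d T q x y - ?m" using cs by simp
        then have "?a^2 \<le> (Zs d T q x y - ?m)^2" using a0 by (intro power_mono) auto
        then show ?thesis using False a0 by (simp add: G_def)
      qed
      have "1 - expx d T p (\<lambda>x. expx d T p (\<lambda>y. G x y)) = expx d T p (\<lambda>x. expx d T p (\<lambda>y. 1 - G x y))"
        by (simp only: expx_diff expx_const[OF pd])
      also have "\<dots> \<le> expx d T p (\<lambda>x. expx d T p (\<lambda>y. (Zs d T q x y - ?m)^2 / ?a^2))"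
        by (rule E2_mono[OF pd pt])
      also have "\<dots> = ?V / ?a^2" by (simp only: expx_divc)
      also have "\<dots> \<le> 4 * (?c + \<theta>)^2 / ?K / ?a^2" using V a0 by (intro divide_right_mono) auto
      also have "\<dots> \<le> 0.01"
      proof -
        have "(?c + \<theta>)^2 \<le> (1.99 * \<theta>)^2" using cs c0 th by (intro power_mono) auto
        then have "4 * (?c + \<theta>)^2 / ?K / ?a^2 \<le> 4 * (1.99 * \<theta>)^2 / ?K / ?a^2"
          using a0 by (intro divide_right_mono) auto
        also have "\<dots> = 4 * 1.99^2 / ?K / 0.005^2" using th by (simp add: power2_eq_square field_simps)
        also have "\<dots> \<le> 0.01" by (simp add: power2_eq_square)
        finally show ?thesis .
      qed
      finally have "0.99 \<le> accept_prob d T 2 p (\<lambda>s. G (fst (phi T s)) (snd (phi T s)))"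
        unfolding acc by simp
    }
    then show "chi2 d (p_avg T p) q \<le> 0.99 * \<theta> \<Longrightarrow> 0.99 \<le> accept_prob d T 2 p (\<lambda>s. G (fst (phi T s)) (snd (phi T s)))"
      by blast
    {
      assume cs: "\<theta> < ?c"
      let ?a = "0.005 * ?c"
      have a0: "0 < ?a" using th cs by simp
      have pt: "G x y \<le> (Zs d T q x y - ?m)^2 / ?a^2" for x y
      proof (cases "Zs d T q x y \<le> 1 + 0.995 * \<theta>")
        case True
        then have "?a \<le> ?m - Zs d T q x y" using cs by simp
        then have "?a^2 \<le> (?m - Zs d T q x y)^2" using a0 by (intro power_mono) auto
        also have "\<dots> = (Zs d T q x y - ?m)^2" by (simp add: power2_commute)
        finally show ?thesis using True a0 by (simp add: G_def)
      next
        case False then show ?thesis by (simp add: G_def)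
      qed
      have "expx d T p (\<lambda>x. expx d T p (\<lambda>y. G x y)) \<le> expx d T p (\<lambda>x. expx d T p (\<lambda>y. (Zs d T q x y - ?m)^2 / ?a^2))"
        by (rule E2_mono[OF pd pt])
      also have "\<dots> = ?V / ?a^2" by (simp only: expx_divc)
      also have "\<dots> \<le> 4 * (?c + \<theta>)^2 / ?K / ?a^2" using V a0 by (intro divide_right_mono) auto
      also have "\<dots> \<le> 0.01"
      proof -
        have "(?c + \<theta>)^2 \<le> (2 * ?c)^2" using cs c0 th by (intro power_mono) auto
        then have "4 * (?c + \<theta>)^2 / ?K / ?a^2 \<le> 4 * (2 * ?c)^2 / ?K / ?a^2"
          using a0 by (intro divide_right_mono) auto
        also have "\<dots> = 4 * 2^2 / ?K / 0.005^2" using a0 by (simp add: power2_eq_square field_simps)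
        also have "\<dots> \<le> 0.01" by (simp add: power2_eq_square)
        finally show ?thesis .
      qed
      finally have "0.99 \<le> 1 - accept_prob d T 2 p (\<lambda>s. G (fst (phi T s)) (snd (phi T s)))"
        unfolding acc by simp
    }
    then show "\<theta> < chi2 d (p_avg T p) q \<Longrightarrow> 0.99 \<le> 1 - accept_prob d T 2 p (\<lambda>s. G (fst (phi T s)) (snd (phi T s)))"
      by blast
  qed
qed

end
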